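(* Let $n\ge 2$ and let $\mathrm W=\mathfrak S_n\ltimes\mathfrak X$ be the extended affine Weyl group, where $\mathfrak X$ is the free abelian group of Laurent monomials $X_1^{a_1}\cdots X_n^{a_n}$ ($a_i\in\mathbb Z$) on which $\mathfrak S_n$ acts by $wX_iw^{-1}=X_{w(i)}$. For $J,K\subseteq \mathbb I=\{s_1,\dots,s_{n-1}\}$, the sets $$\Delta_{K,J}=\{dp \mid d\in D^{\mathbb I}_{K,J},\ p\in \overrightarrow{\mathfrak P}_{d^{-1}K\cap J}\},\qquad \nabla_{K,J}=\{dp \mid d\in D^{\mathbb I}_{K,J},\ p\in \overleftarrow{\mathfrak P}_{d^{-1}K\cap J}\}$$ are each a complete set of pairwise inequivalent representatives of the double cosets $\mathrm W_K\backslash \mathrm W/\mathrm W_J$.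
   Context: $s_i$ denotes the simple transposition $(i,i+1)\in\mathfrak S_n$. For $L\subseteq\mathbb I$, $\mathrm W_L$ is the (finite) parabolic subgroup of $\mathfrak S_n\subseteq\mathrm W$ generated by $L$. $D^{\mathbb I}_{K,J}$ denotes the set of minimal-length (Coxeter length in $\mathfrak S_n$) representatives of the double cosets $\mathrm W_K\backslash\mathfrak S_n/\mathrm W_J$. For $d\in D^{\mathbb I}_{K,J}$, $d^{-1}K\cap J=\{s\in J\mid dsd^{-1}\in K\}$. For $L\subseteq\mathbb I$, a monomial $X_1^{a_1}\cdots X_n^{a_n}$ is $L$-dominant if $a_i\ge a_j$ whenever $i\le j$ lie in the same orbit of $\mathrm W_L$ on $\{1,\dots,n\}$, and $L$-antidominant if $a_i\le a_j$ for all such $i\le j$; $\overrightarrow{\mathfrak P}_L$ and $\overleftarrow{\mathfrak P}_L$ denote the sets of $L$-dominant, respectively $L$-antidominant, monomials. *)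

theory Defs
  imports "HOL-Combinatorics.Combinatorics"
begin

(* Indices 1..n.  An element  w X^a  of W = S_n \<ltimes> X is encoded as the pair (w, a),
   w a permutation of {1..n}, a an integer exponent vector supported on {1..n}. *)

definition expvecs :: "nat \<Rightarrow> (nat \<Rightarrow> int) set" where
  "expvecs n = {a. \<forall>i. i \<notin> {1..n} \<longrightarrow> a i = 0}"

definition Wext :: "nat \<Rightarrow> ((nat \<Rightarrow> nat) \<times> (nat \<Rightarrow> int)) set" where
  "Wext n = {(w, a). w permutes {1..n} \<and> a \<in> expvecs n}"

(* (w X^a)(v X^b) = w v (v^{-1} X^a v) X^b, and v^{-1} X_i v = X_{v^{-1}(i)} *)
definition Wmult :: "((nat \<Rightarrow> nat) \<times> (nat \<Rightarrow> int)) \<Rightarrow> ((nat \<Rightarrow> nat) \<times> (nat \<Rightarrow> int))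
    \<Rightarrow> ((nat \<Rightarrow> nat) \<times> (nat \<Rightarrow> int))" where
  "Wmult x y = (fst x \<circ> fst y, (\<lambda>j. snd x (fst y j) + snd y j))"

definition simple :: "nat \<Rightarrow> nat \<Rightarrow> nat" where
  "simple i = transpose i (i + 1)"

inductive_set parabolic :: "nat set \<Rightarrow> (nat \<Rightarrow> nat) set" for L where
  id: "id \<in> parabolic L"
| step: "i \<in> L \<Longrightarrow> w \<in> parabolic L \<Longrightarrow> simple i \<circ> w \<in> parabolic L"

definition word_prod :: "nat list \<Rightarrow> nat \<Rightarrow> nat" where
  "word_prod is = foldr (\<lambda>i f. simple i \<circ> f) is id"

definition cox_length :: "nat \<Rightarrow> (nat \<Rightarrow> nat) \<Rightarrow> nat" where
  "cox_length n w = (LEAST k. \<exists>is. length is = k \<and> set is \<subseteq> {1..<n} \<and> word_prod is = w)"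

definition minreps :: "nat \<Rightarrow> nat set \<Rightarrow> nat set \<Rightarrow> (nat \<Rightarrow> nat) set" where
  "minreps n K J = {d. d permutes {1..n} \<and>
     (\<forall>u\<in>parabolic K. \<forall>v\<in>parabolic J. cox_length n d \<le> cox_length n (u \<circ> d \<circ> v))}"

(* d^{-1} K \<inter> J = {s \<in> J | d s d^{-1} \<in> K}, as a set of indices *)
definition conj_inter :: "(nat \<Rightarrow> nat) \<Rightarrow> nat set \<Rightarrow> nat set \<Rightarrow> nat set" where
  "conj_inter d K J = {j \<in> J. \<exists>k\<in>K. d \<circ> simple j \<circ> inv d = simple k}"

definition same_orbit :: "nat set \<Rightarrow> nat \<Rightarrow> nat \<Rightarrow> bool" where
  "same_orbit L i j \<longleftrightarrow> (\<exists>u\<in>parabolic L. u i = j)"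

definition dominant :: "nat \<Rightarrow> nat set \<Rightarrow> (nat \<Rightarrow> int) set" where
  "dominant n L = {a \<in> expvecs n. \<forall>i\<in>{1..n}. \<forall>j\<in>{1..n}.
      i \<le> j \<and> same_orbit L i j \<longrightarrow> a i \<ge> a j}"

definition antidominant :: "nat \<Rightarrow> nat set \<Rightarrow> (nat \<Rightarrow> int) set" where
  "antidominant n L = {a \<in> expvecs n. \<forall>i\<in>{1..n}. \<forall>j\<in>{1..n}.
      i \<le> j \<and> same_orbit L i j \<longrightarrow> a i \<le> a j}"

definition Delta :: "nat \<Rightarrow> nat set \<Rightarrow> nat set \<Rightarrow> ((nat \<Rightarrow> nat) \<times> (nat \<Rightarrow> int)) set" where
  "Delta n K J = {Wmult (d, \<lambda>_. 0) (id, p) | d p. d \<in> minreps n K J \<and> p \<in> dominant n (conj_inter d K J)}"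

definition Nabla :: "nat \<Rightarrow> nat set \<Rightarrow> nat set \<Rightarrow> ((nat \<Rightarrow> nat) \<times> (nat \<Rightarrow> int)) set" where
  "Nabla n K J = {Wmult (d, \<lambda>_. 0) (id, p) | d p. d \<in> minreps n K J \<and> p \<in> antidominant n (conj_inter d K J)}"

definition dcoset_equiv :: "nat set \<Rightarrow> nat set \<Rightarrow> ((nat \<Rightarrow> nat) \<times> (nat \<Rightarrow> int))
    \<Rightarrow> ((nat \<Rightarrow> nat) \<times> (nat \<Rightarrow> int)) \<Rightarrow> bool" where
  "dcoset_equiv K J x y \<longleftrightarrow>
     (\<exists>u\<in>parabolic K. \<exists>v\<in>parabolic J. y = Wmult (Wmult (u, \<lambda>_. 0) x) (v, \<lambda>_. 0))"

definition complete_reps :: "nat \<Rightarrow> nat set \<Rightarrow> nat set \<Rightarrow> ((nat \<Rightarrow> nat) \<times> (nat \<Rightarrow> int)) set \<Rightarrow> bool" where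
  "complete_reps n K J R \<longleftrightarrow> R \<subseteq> Wext n \<and>
     (\<forall>x\<in>Wext n. \<exists>r\<in>R. dcoset_equiv K J x r) \<and>
     (\<forall>r\<in>R. \<forall>r'\<in>R. dcoset_equiv K J r r' \<longrightarrow> r = r')"

end

theory Submission
  imports Defs
begin

definition sameblock :: "nat set \<Rightarrow> nat \<Rightarrow> nat \<Rightarrow> bool" where
  "sameblock L i j \<longleftrightarrow> (\<forall>k. min i j \<le> k \<and> k < max i j \<longrightarrow> k \<in> L)"

lemma sb_refl[simp]: "sameblock L i i" by (auto simp add: sameblock_def)

lemma sb_sym: "sameblock L i j \<Longrightarrow> sameblock L j i"
  by (simp add: sameblock_def min.commute max.commute)

lemma sb_trans: assumes "sameblock L i j" "sameblock L j k" shows "sameblock L i k"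
  unfolding sameblock_def
proof (intro allI impI)
  fix m assume m: "min i k \<le> m \<and> m < max i k"
  then have "(min i j \<le> m \<and> m < max i j) \<or> (min j k \<le> m \<and> m < max j k)"
    by (auto simp: min_def max_def split: if_splits)
  then show "m \<in> L" using assms unfolding sameblock_def by blast
qed

lemma sb_sub: "sameblock L a b \<Longrightarrow> min a b \<le> c \<Longrightarrow> c \<le> max a b \<Longrightarrow> sameblock L a c"
  unfolding sameblock_def by (auto simp: min_def max_def split: if_splits)

lemma sb_order:
  assumes "\<not> sameblock L z z'" "z < z'" "sameblock L z w" "sameblock L z' w'"
  shows "w < w'"
proof -
  obtain k where k: "z \<le> k" "k < z'" "k \<notin> L" using assms(1,2) unfolding sameblock_def
    by (auto simp: min_def max_def)
  have "w \<le> k"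
  proof (rule ccontr)
    assume "\<not> w \<le> k" then show False using assms(3) k unfolding sameblock_def
      by (auto simp: min_def max_def split: if_splits)
  qed
  moreover have "k < w'"
  proof (rule ccontr)
    assume "\<not> k < w'" then show False using assms(4) k unfolding sameblock_def
      by (auto simp: min_def max_def split: if_splits)
  qed
  ultimately show ?thesis by simp
qed

lemma sb_Suc: "sameblock L i (Suc j) \<Longrightarrow> i \<le> j \<Longrightarrow> sameblock L i j \<and> j \<in> L"
  unfolding sameblock_def by (auto simp: min_def max_def)

lemma sb_SucI: "sameblock L i j \<Longrightarrow> i \<le> j \<Longrightarrow> j \<in> L \<Longrightarrow> sameblock L i (Suc j)"
  unfolding sameblock_def by (auto simp: min_def max_def less_Suc_eq)

lemma chain_strict:
  fixes f :: "nat \<Rightarrow> 'a::linorder"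
  assumes "\<forall>k\<in>L. f k < f (Suc k)"
  shows "i < j \<Longrightarrow> sameblock L i j \<Longrightarrow> f i < f j"
proof (induction j)
  case 0 then show ?case by simp
next
  case (Suc j)
  then have "sameblock L i j" "j \<in> L" using sb_Suc by auto
  then show ?case using Suc assms
    by (metis less_Suc_eq order.strict_trans)
qed

lemma chain_weak:
  fixes f :: "nat \<Rightarrow> 'a::linorder"
  assumes "\<forall>k\<in>L. f (Suc k) \<le> f k"
  shows "i \<le> j \<Longrightarrow> sameblock L i j \<Longrightarrow> f j \<le> f i"
proof (induction j)
  case 0 then show ?case by simp
next
  case (Suc j)
  show ?case
  proof (cases "i = Suc j")
    case False
    then have "i \<le> j" using Suc by simp
    then have "sameblock L i j" "j \<in> L" using sb_Suc Suc by auto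
    then show ?thesis using Suc assms \<open>i \<le> j\<close> by (metis order.trans)
  qed simp
qed

lemma simple_bij[simp]: "bij (simple i)" by (simp add: simple_def)
lemma simple_inv[simp]: "inv (simple i) = simple i" by (simp add: simple_def)
lemma simple_invol[simp]: "simple i \<circ> simple i = id" by (simp add: simple_def)
lemma simple_invol2[simp]: "simple i (simple i x) = x" by (simp add: simple_def)
lemma simple_perm: "i \<in> {1..<n} \<Longrightarrow> simple i permutes {1..n}"
  unfolding simple_def by (rule permutes_swap_id) auto

lemma parab_bij: "u \<in> parabolic L \<Longrightarrow> bij u"
proof (induction rule: parabolic.induct)
  case id then show ?case by (rule bij_id)
next
  case (step i w) then show ?case using bij_comp[OF step(3) simple_bij] by blast
qed

lemma parab_perm: "u \<in> parabolic L \<Longrightarrow> L \<subseteq> {1..<n} \<Longrightarrow> u permutes {1..n}"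
proof (induction rule: parabolic.induct)
  case id show ?case by (rule permutes_id)
next
  case (step i w)
  then have "w permutes {1..n}" "i \<in> {1..<n}" by auto
  then show ?case using permutes_compose simple_perm by blast
qed

lemma parab_gen: "i \<in> L \<Longrightarrow> simple i \<in> parabolic L"
  using parabolic.step[OF _ parabolic.id] by (metis comp_id)

lemma parab_rmul: "w \<in> parabolic L \<Longrightarrow> i \<in> L \<Longrightarrow> w \<circ> simple i \<in> parabolic L"
  by (induction rule: parabolic.induct) (auto simp: parab_gen comp_assoc intro: parabolic.step)

lemma parab_comp: "u \<in> parabolic L \<Longrightarrow> v \<in> parabolic L \<Longrightarrow> u \<circ> v \<in> parabolic L"
  by (induction rule: parabolic.induct) (auto simp: comp_assoc intro: parabolic.step)

lemma parab_inv: "u \<in> parabolic L \<Longrightarrow> inv u \<in> parabolic L"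
proof (induction rule: parabolic.induct)
  case id show ?case by (metis inv_id parabolic.id)
next
  case (step i w)
  have "inv (simple i \<circ> w) = inv w \<circ> simple i"
    using o_inv_distrib[OF simple_bij parab_bij[OF step(2)]] by simp
  then show ?case using parab_rmul step by metis
qed

lemma parab_mono: "u \<in> parabolic L \<Longrightarrow> L \<subseteq> L' \<Longrightarrow> u \<in> parabolic L'"
  by (induction rule: parabolic.induct) (auto intro: parabolic.intros)

lemma simple_sb: "i \<in> L \<Longrightarrow> sameblock L y (simple i y)"
  unfolding simple_def sameblock_def
  by (auto simp: transpose_def min_def max_def less_Suc_eq)

lemma parab_sb: "u \<in> parabolic L \<Longrightarrow> sameblock L x (u x)"
  by (induction rule: parabolic.induct) (auto intro: sb_trans simple_sb)

lemma sb_orbit_le: "i \<le> j \<Longrightarrow> sameblock L i j \<Longrightarrow> \<exists>u\<in>parabolic L. u i = j"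
proof (induction j)
  case 0 then show ?case using parabolic.id by (intro bexI[of _ id]) auto
next
  case (Suc j)
  show ?case
  proof (cases "i = Suc j")
    case True then show ?thesis using parabolic.id by (intro bexI[of _ id]) auto
  next
    case False
    then have "i \<le> j" using Suc by simp
    then have "sameblock L i j" "j \<in> L" using sb_Suc Suc by auto
    then obtain u where "u \<in> parabolic L" "u i = j" using Suc \<open>i \<le> j\<close> by auto
    then show ?thesis using \<open>j \<in> L\<close>
      using parabolic.step[of j L u] by (intro bexI[of _ "simple j \<circ> u"]) (auto simp: simple_def)
  qed
qed

lemma orbit_iff: "same_orbit L i j \<longleftrightarrow> sameblock L i j"
proof
  assume "same_orbit L i j" then show "sameblock L i j"
    unfolding same_orbit_def using parab_sb by blast
next
  assume sb: "sameblock L i j"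
  show "same_orbit L i j"
  proof (cases "i \<le> j")
    case True then show ?thesis using sb_orbit_le sb unfolding same_orbit_def by blast
  next
    case False
    then obtain u where u: "u \<in> parabolic L" "u j = i" using sb_orbit_le[of j i L] sb_sym[OF sb] by auto
    then have "inv u i = j" using parab_bij[OF u(1)] by (metis bij_inv_eq_iff)
    then show ?thesis using parab_inv[OF u(1)] unfolding same_orbit_def by blast
  qed
qed


definition invs :: "nat \<Rightarrow> (nat \<Rightarrow> nat) \<Rightarrow> (nat \<times> nat) set" where
  "invs n w = {(a,b). a \<in> {1..n} \<and> b \<in> {1..n} \<and> a < b \<and> w b < w a}"

definition ninv :: "nat \<Rightarrow> (nat \<Rightarrow> nat) \<Rightarrow> nat" where
  "ninv n w = card (invs n w)"

lemma invs_finite[simp]: "finite (invs n w)"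
  by (rule finite_subset[of _ "{1..n} \<times> {1..n}"]) (auto simp: invs_def)

lemma simple_order_other:
  "p \<noteq> q \<Longrightarrow> \<not> ({p,q} = {i, Suc i}) \<Longrightarrow> (simple i q < simple i p) = (q < p)"
  unfolding simple_def transpose_def by auto

lemma simple_order_swap:
  "{p,q} = {i, Suc i} \<Longrightarrow> (simple i q < simple i p) = (p < q)"
  unfolding simple_def transpose_def by (auto simp: doubleton_eq_iff)

lemma invs_left:
  assumes w: "w permutes {1..n}" and i: "i \<in> {1..<n}"
    and x: "x \<in> {1..n}" and y: "y \<in> {1..n}" and xy: "x < y"
  shows "(simple i (w y) < simple i (w x)) =
     (if {x,y} = {inv w i, inv w (Suc i)} then w x < w y else w y < w x)"
proof -
  have ne: "w x \<noteq> w y" using xy permutes_inj[OF w] by (metis inj_eq less_irrefl)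
  have "{i, Suc i} = w ` {inv w i, inv w (Suc i)}" using permutes_inverses[OF w] by simp
  moreover have "{w x, w y} = w ` {x,y}" by simp
  ultimately have "({w x, w y} = {i, Suc i}) = ({x,y} = {inv w i, inv w (Suc i)})"
    using inj_image_eq_iff[OF permutes_inj[OF w]] by metis
  then show ?thesis using simple_order_other[OF ne] simple_order_swap by auto
qed

lemma inv_perm_range:
  assumes w: "w permutes {1..n}" and i: "i \<in> {1..n}" shows "inv w i \<in> {1..n}"
  using permutes_in_image[OF permutes_inv[OF w]] i by blast

lemma ninv_left_asc:
  assumes w: "w permutes {1..n}" and i: "i \<in> {1..<n}" and ab: "inv w i < inv w (Suc i)"
  shows "ninv n (simple i \<circ> w) = Suc (ninv n w)"
proof -
  let ?a = "inv w i" and ?b = "inv w (Suc i)"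
  have a: "?a \<in> {1..n}" "w ?a = i" using inv_perm_range[OF w] i permutes_inverses[OF w] by auto
  have b: "?b \<in> {1..n}" "w ?b = Suc i" using inv_perm_range[OF w] i permutes_inverses[OF w] by auto
  have "invs n (simple i \<circ> w) = insert (?a,?b) (invs n w)"
  proof (rule set_eqI, clarify)
    fix x y
    show "((x,y) \<in> invs n (simple i \<circ> w)) = ((x,y) \<in> insert (?a,?b) (invs n w))"
    proof (cases "x \<in> {1..n} \<and> y \<in> {1..n} \<and> x < y")
      case True
      have eq: "({x,y} = {?a,?b}) = ((x,y) = (?a,?b))" using True ab by (auto simp: doubleton_eq_iff)
      have l: "((x,y) \<in> invs n (simple i \<circ> w)) = (simple i (w y) < simple i (w x))"
        using True by (simp add: invs_def)
      have r: "((x,y) \<in> invs n w) = (w y < w x)" using True by (simp add: invs_def)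
      show ?thesis
      proof (cases "(x,y) = (?a,?b)")
        case c: True
        then show ?thesis using l invs_left[OF w i, of x y] True eq a b by simp
      next
        case c: False
        then have nc: "{x,y} \<noteq> {?a,?b}" using eq by simp
        have "(simple i (w y) < simple i (w x)) = (w y < w x)"
          using invs_left[OF w i, of x y] True nc by simp
        then show ?thesis using l r c by auto
      qed
    next
      case False then show ?thesis using a b ab by (auto simp: invs_def)
    qed
  qed
  moreover have "(?a,?b) \<notin> invs n w" using a b by (auto simp: invs_def)
  ultimately show ?thesis by (simp add: ninv_def)
qed

lemma ninv_left_desc:
  assumes w: "w permutes {1..n}" and i: "i \<in> {1..<n}" and ab: "inv w (Suc i) < inv w i"
  shows "Suc (ninv n (simple i \<circ> w)) = ninv n w"
proof -
  let ?a = "inv w i" and ?b = "inv w (Suc i)"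
  have a: "?a \<in> {1..n}" "w ?a = i" using inv_perm_range[OF w] i permutes_inverses[OF w] by auto
  have b: "?b \<in> {1..n}" "w ?b = Suc i" using inv_perm_range[OF w] i permutes_inverses[OF w] by auto
  have "invs n w = insert (?b,?a) (invs n (simple i \<circ> w))"
  proof (rule set_eqI, clarify)
    fix x y
    show "((x,y) \<in> invs n w) = ((x,y) \<in> insert (?b,?a) (invs n (simple i \<circ> w)))"
    proof (cases "x \<in> {1..n} \<and> y \<in> {1..n} \<and> x < y")
      case True
      have eq: "({x,y} = {?a,?b}) = ((x,y) = (?b,?a))" using True ab by (auto simp: doubleton_eq_iff)
      have l: "((x,y) \<in> invs n (simple i \<circ> w)) = (simple i (w y) < simple i (w x))"
        using True by (simp add: invs_def)
      have r: "((x,y) \<in> invs n w) = (w y < w x)" using True by (simp add: invs_def)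
      show ?thesis
      proof (cases "(x,y) = (?b,?a)")
        case c: True
        then show ?thesis using l r invs_left[OF w i, of x y] True eq a b by simp
      next
        case c: False
        then have nc: "{x,y} \<noteq> {?a,?b}" using eq by simp
        have "(simple i (w y) < simple i (w x)) = (w y < w x)"
          using invs_left[OF w i, of x y] True nc by simp
        then show ?thesis using l r c by auto
      qed
    next
      case False then show ?thesis using a b ab by (auto simp: invs_def)
    qed
  qed
  moreover have "(?b,?a) \<notin> invs n (simple i \<circ> w)" using a b ab
    by (auto simp: invs_def simple_def)
  ultimately show ?thesis by (simp add: ninv_def)
qed

lemma ninv_left_le:
  assumes w: "w permutes {1..n}" and i: "i \<in> {1..<n}"
  shows "ninv n (simple i \<circ> w) \<le> Suc (ninv n w)"
proof -
  have "inv w i \<noteq> inv w (Suc i)"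
    using permutes_inverses[OF w] by (metis n_not_Suc_n)
  then show ?thesis using ninv_left_asc[OF w i] ninv_left_desc[OF w i]
    by (metis le_SucI le_refl nat_neq_iff)
qed

lemma ninv_inv:
  assumes w: "w permutes {1..n}" shows "ninv n (inv w) = ninv n w"
proof -
  let ?f = "\<lambda>(x,y). (w y, w x)"
  have inw: "\<And>x. (w x \<in> {1..n}) = (x \<in> {1..n})" using permutes_in_image[OF w] by blast
  have iv: "\<And>x. inv w (w x) = x" "\<And>x. w (inv w x) = x" using permutes_inverses[OF w] by auto
  have "?f ` invs n w = invs n (inv w)"
  proof (rule set_eqI, rule iffI)
    fix z assume "z \<in> ?f ` invs n w"
    then obtain x y where xy: "(x,y) \<in> invs n w" "z = (w y, w x)" by auto
    then show "z \<in> invs n (inv w)"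
      unfolding invs_def using inw[of x] inw[of y] iv by auto
  next
    fix z assume z: "z \<in> invs n (inv w)"
    obtain p q where pq: "z = (p,q)" by fastforce
    have "(inv w q, inv w p) \<in> invs n w"
      using z unfolding pq invs_def using inw iv by (metis (mono_tags, lifting) case_prod_conv mem_Collect_eq)
    moreover have "z = ?f (inv w q, inv w p)"
      using pq iv by simp
    ultimately show "z \<in> ?f ` invs n w" by blast
  qed
  moreover have "inj_on ?f (invs n w)"
    using permutes_inj[OF w] unfolding inj_on_def by (auto simp: inj_eq)
  ultimately show ?thesis unfolding ninv_def by (metis card_image)
qed

lemma word_prod_Nil[simp]: "word_prod [] = id" by (simp add: word_prod_def)
lemma word_prod_Cons[simp]: "word_prod (i # ws) = simple i \<circ> word_prod ws" by (simp add: word_prod_def)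

lemma word_prod_perm: "set ws \<subseteq> {1..<n} \<Longrightarrow> word_prod ws permutes {1..n}"
proof (induction "ws")
  case Nil show ?case using permutes_id by (metis word_prod_Nil)
next
  case (Cons i ws)
  then have "word_prod ws permutes {1..n}" "i \<in> {1..<n}" by auto
  then show ?case using permutes_compose simple_perm by (metis word_prod_Cons)
qed

lemma ninv_id[simp]: "ninv n id = 0"
proof -
  have "invs n id = {}" by (auto simp: invs_def)
  then show ?thesis by (simp add: ninv_def)
qed

lemma ninv_word: "set ws \<subseteq> {1..<n} \<Longrightarrow> ninv n (word_prod ws) \<le> length ws"
proof (induction "ws")
  case Nil show ?case by (simp only: word_prod_Nil ninv_id list.size)
next
  case (Cons i ws)
  then have "word_prod ws permutes {1..n}" "i \<in> {1..<n}" "ninv n (word_prod ws) \<le> length ws"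
    using word_prod_perm by auto
  then show ?case using ninv_left_le by (metis word_prod_Cons length_Cons le_trans Suc_le_mono)
qed

lemma incr_id:
  assumes g: "g permutes {1..n}" and inc: "\<forall>i\<in>{1..<n}. g i < g (Suc i)"
  shows "g = id"
proof -
  have ing: "\<And>x. (g x \<in> {1..n}) = (x \<in> {1..n})" using permutes_in_image[OF g] by blast
  have mono: "g i < g j" if "i \<in> {1..n}" "j \<in> {1..n}" "i < j" for i j
  proof -
    have "sameblock {1..<n} i j" using that unfolding sameblock_def by auto
    then show ?thesis using chain_strict[OF inc] that(3) by blast
  qed
  have ge: "k \<in> {1..n} \<longrightarrow> k \<le> g k" for k
  proof (induction k)
    case 0 then show ?case by simp
  next
    case (Suc k)
    show ?case
    proof
      assume sk: "Suc k \<in> {1..n}"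
      show "Suc k \<le> g (Suc k)"
      proof (cases "k = 0")
        case True then show ?thesis using ing[of "Suc k"] sk by simp
      next
        case False
        then have k: "k \<in> {1..n}" using sk by simp
        then have "k \<le> g k" using Suc.IH by blast
        moreover have "g k < g (Suc k)" using mono[OF k sk] by simp
        ultimately show ?thesis by simp
      qed
    qed
  qed
  have "sum (\<lambda>k. k) (g ` {1..n}) = sum ((\<lambda>k. k) \<circ> g) {1..n}"
    by (rule sum.reindex[OF permutes_inj_on[OF g]])
  then have sumeq: "sum g {1..n} = sum (\<lambda>k. k) {1..n}"
    using permutes_image[OF g] by (simp add: o_def)
  have "g k = k" for k
  proof (cases "k \<in> {1..n}")
    case True
    have "k \<le> g k" using ge True by blast
    moreover have "g k \<le> k"
      using sum_mono_inv[OF sumeq[symmetric], of k] ge True by (metis finite_atLeastAtMost)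
    ultimately show ?thesis by simp
  next
    case False then show ?thesis using permutes_not_in[OF g] by auto
  qed
  then show ?thesis by auto
qed

lemma desc_exists:
  assumes w: "w permutes {1..n}" and ne: "w \<noteq> id"
  shows "\<exists>i\<in>{1..<n}. inv w (Suc i) < inv w i"
proof (rule ccontr)
  assume "\<not> ?thesis"
  then have "\<forall>i\<in>{1..<n}. inv w i < inv w (Suc i)"
    using permutes_inverses[OF w] by (metis linorder_neqE_nat n_not_Suc_n)
  then have "inv w = id" using incr_id[OF permutes_inv[OF w]] by blast
  then have "w = id" using permutes_inv_inv[OF w] by (metis inv_id)
  then show False using ne by simp
qed

lemma word_exists:
  "w permutes {1..n} \<Longrightarrow> \<exists>ws. length ws = ninv n w \<and> set ws \<subseteq> {1..<n} \<and> word_prod ws = w"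
proof (induction "ninv n w" arbitrary: w rule: less_induct)
  case less
  show ?case
  proof (cases "w = id")
    case True then show ?thesis by (intro exI[of _ "[]"]) simp
  next
    case False
    then obtain i where i: "i \<in> {1..<n}" "inv w (Suc i) < inv w i"
      using desc_exists less.prems by blast
    let ?w = "simple i \<circ> w"
    have p: "?w permutes {1..n}" using permutes_compose[OF less.prems simple_perm[OF i(1)]] .
    have c: "Suc (ninv n ?w) = ninv n w" using ninv_left_desc[OF less.prems i] .
    then obtain ws where "length ws = ninv n ?w" "set ws \<subseteq> {1..<n}" "word_prod ws = ?w"
      using less.hyps[OF _ p] by auto
    then show ?thesis using c i
      by (intro exI[of _ "i # ws"]) (auto simp: comp_assoc[symmetric])
  qed
qed

lemma cox_eq: assumes w: "w permutes {1..n}" shows "cox_length n w = ninv n w"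
  unfolding cox_length_def
proof (rule Least_equality)
  show "\<exists>ws. length ws = ninv n w \<and> set ws \<subseteq> {1..<n} \<and> word_prod ws = w"
    using word_exists[OF w] .
next
  fix k assume "\<exists>ws. length ws = k \<and> set ws \<subseteq> {1..<n} \<and> word_prod ws = w"
  then show "ninv n w \<le> k" using ninv_word by blast
qed


definition reduced :: "nat \<Rightarrow> nat set \<Rightarrow> nat set \<Rightarrow> (nat \<Rightarrow> nat) \<Rightarrow> bool" where
  "reduced n K J d \<longleftrightarrow> d permutes {1..n} \<and> (\<forall>j\<in>J. d j < d (Suc j)) \<and> (\<forall>k\<in>K. inv d k < inv d (Suc k))"

lemma minreps_reduced:
  assumes J: "J \<subseteq> {1..<n}" and K: "K \<subseteq> {1..<n}" and d: "d \<in> minreps n K J"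
  shows "reduced n K J d"
proof -
  have dp: "d permutes {1..n}" using d by (simp add: minreps_def)
  have min: "\<And>u v. u \<in> parabolic K \<Longrightarrow> v \<in> parabolic J \<Longrightarrow> cox_length n d \<le> cox_length n (u \<circ> d \<circ> v)"
    using d by (simp add: minreps_def)
  have iv: "\<And>x. inv d (d x) = x" "\<And>x. d (inv d x) = x" using permutes_inverses[OF dp] by auto
  have A: "d j < d (Suc j)" if j: "j \<in> J" for j
  proof (rule ccontr)
    assume "\<not> d j < d (Suc j)"
    moreover have "d j \<noteq> d (Suc j)" using permutes_inj[OF dp] by (metis inj_eq n_not_Suc_n)
    ultimately have lt: "inv (inv d) (Suc j) < inv (inv d) j" using permutes_inv_inv[OF dp] by simp
    have jr: "j \<in> {1..<n}" using j J by auto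
    have ip: "inv d permutes {1..n}" using permutes_inv[OF dp] .
    have c: "Suc (ninv n (simple j \<circ> inv d)) = ninv n (inv d)"
      using ninv_left_desc[OF ip jr lt] .
    have sp: "simple j \<circ> inv d permutes {1..n}" using permutes_compose[OF ip simple_perm[OF jr]] .
    have e: "inv (simple j \<circ> inv d) = d \<circ> simple j"
      using o_inv_distrib[OF simple_bij permutes_bij[OF ip]] permutes_inv_inv[OF dp] by simp
    have "ninv n (d \<circ> simple j) = ninv n (simple j \<circ> inv d)"
      using ninv_inv[OF sp] e by simp
    moreover have "ninv n (inv d) = ninv n d" using ninv_inv[OF dp] .
    moreover have "d \<circ> simple j permutes {1..n}" using permutes_compose[OF simple_perm[OF jr] dp] .
    moreover have "cox_length n d \<le> cox_length n (id \<circ> d \<circ> simple j)"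
      using min[OF parabolic.id parab_gen[OF j]] .
    ultimately show False using c cox_eq dp by (metis comp_id id_comp not_less_eq_eq order_refl)
  qed
  have B: "inv d k < inv d (Suc k)" if k: "k \<in> K" for k
  proof (rule ccontr)
    assume "\<not> inv d k < inv d (Suc k)"
    moreover have "inv d k \<noteq> inv d (Suc k)" using iv by (metis n_not_Suc_n)
    ultimately have lt: "inv d (Suc k) < inv d k" by simp
    have kr: "k \<in> {1..<n}" using k K by auto
    have c: "Suc (ninv n (simple k \<circ> d)) = ninv n d"
      using ninv_left_desc[OF dp kr lt] .
    have "simple k \<circ> d permutes {1..n}" using permutes_compose[OF dp simple_perm[OF kr]] .
    moreover have "cox_length n d \<le> cox_length n (simple k \<circ> d \<circ> id)"
      using min[OF parab_gen[OF k] parabolic.id] .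
    ultimately show False using c cox_eq dp by (metis comp_id not_less_eq_eq order_refl)
  qed
  show ?thesis using dp A B by (simp add: reduced_def)
qed

lemma card_inv:
  assumes v: "v permutes {1..n}" and sb: "\<forall>y. sameblock J y (v y)"
  shows "card {y. y \<in> {1..n} \<and> sameblock J x y \<and> P (v y)} = card {y. y \<in> {1..n} \<and> sameblock J x y \<and> P y}"
proof -
  let ?A = "{y. y \<in> {1..n} \<and> sameblock J x y \<and> P (v y)}"
  let ?B = "{y. y \<in> {1..n} \<and> sameblock J x y \<and> P y}"
  have inv: "\<And>y. (v y \<in> {1..n}) = (y \<in> {1..n})" using permutes_in_image[OF v] by blast
  have "v ` ?A = ?B"
  proof (rule set_eqI, rule iffI)
    fix z assume "z \<in> v ` ?A"
    then obtain y where y: "y \<in> ?A" "z = v y" by blast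
    have "sameblock J x (v y)" using y(1) sb_trans[of J x y "v y"] sb by simp
    moreover have "v y \<in> {1..n}" using y(1) inv by simp
    ultimately show "z \<in> ?B" using y by simp
  next
    fix z assume z: "z \<in> ?B"
    let ?y = "inv v z"
    have vy: "v ?y = z" using permutes_inverses[OF v] by simp
    have "sameblock J ?y z" using sb[rule_format, of ?y] vy by simp
    then have "sameblock J x ?y" using z sb_trans[of J x z ?y] sb_sym[of J ?y z] by simp
    moreover have "?y \<in> {1..n}" using inv[of ?y] vy z by simp
    ultimately have "?y \<in> ?A" using vy z by simp
    then show "z \<in> v ` ?A" using vy image_eqI[of z v ?y ?A] by simp
  qed
  then show ?thesis using card_image[OF permutes_inj_on[OF v], of ?A] by simp
qed

lemma step_lemma:
  assumes rd: "reduced n K J d" and rd': "reduced n K J d'"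
    and u: "u \<in> parabolic K" and v: "v \<in> parabolic J" and eq: "d' = u \<circ> d \<circ> v"
    and J: "J \<subseteq> {1..<n}" and K: "K \<subseteq> {1..<n}"
    and x: "x \<in> {1..n}" and IH: "\<forall>y<x. d y = d' y" and lt: "d x < d' x"
  shows False
proof -
  have dp: "d permutes {1..n}" and dinc: "\<forall>j\<in>J. d j < d (Suc j)"
    and dinv: "\<forall>k\<in>K. inv d k < inv d (Suc k)" using rd by (auto simp: reduced_def)
  have dp': "d' permutes {1..n}" and dinc': "\<forall>j\<in>J. d' j < d' (Suc j)"
    and dinv': "\<forall>k\<in>K. inv d' k < inv d' (Suc k)" using rd' by (auto simp: reduced_def)
  have vp: "v permutes {1..n}" using parab_perm[OF v J] .
  let ?z = "d x" and ?z' = "d' x"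
  show False
  proof (cases "sameblock K ?z ?z'")
    case True
    have "inv d' ?z < inv d' ?z'" using chain_strict[OF dinv' lt True] .
    moreover have "inv d' ?z' = x" using permutes_inverses[OF dp'] by simp
    ultimately have y: "inv d' ?z < x" by simp
    then have "d (inv d' ?z) = d' (inv d' ?z)" using IH by blast
    also have "\<dots> = ?z" using permutes_inverses[OF dp'] by simp
    finally have "inv d' ?z = x" using permutes_inj[OF dp] by (metis inj_eq)
    then show False using y by simp
  next
    case False
    define S where "S = {y. y \<in> {1..n} \<and> sameblock J x y \<and> sameblock K ?z (d y)}"
    define S' where "S' = {y. y \<in> {1..n} \<and> sameblock J x y \<and> sameblock K ?z (d' y)}"
    define T where "T = {y. y \<in> {1..n} \<and> sameblock J x y \<and> y < x \<and> sameblock K ?z (d y)}"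
    have "S' = {y. y \<in> {1..n} \<and> sameblock J x y \<and> sameblock K ?z (d (v y))}"
    proof -
      have "sameblock K ?z (d' y) = sameblock K ?z (d (v y))" for y
      proof -
        have "sameblock K (d (v y)) (d' y)" using parab_sb[OF u] eq by simp
        then show ?thesis using sb_trans sb_sym by blast
      qed
      then show ?thesis unfolding S'_def by simp
    qed
    then have cS: "card S' = card S"
      unfolding S_def using card_inv[OF vp, of J x "\<lambda>m. sameblock K ?z (d m)"] parab_sb[OF v] by simp
    have fin: "finite S" unfolding S_def by (rule finite_subset[of _ "{1..n}"]) auto
    have "T \<subset> S"
    proof
      show "T \<subseteq> S" unfolding T_def S_def by auto
      have "x \<in> S" using x unfolding S_def by simp
      moreover have "x \<notin> T" unfolding T_def by simp
      ultimately show "T \<noteq> S" by blast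
    qed
    then have c1: "card T < card S" using psubset_card_mono fin by blast
    have "S' \<subseteq> T"
    proof
      fix y assume y: "y \<in> S'"
      have "d' y < ?z'" using sb_order[OF False lt] y unfolding S'_def by simp
      moreover have "\<not> x < y"
      proof
        assume "x < y"
        then have "d' x < d' y" using chain_strict[OF dinc'] y unfolding S'_def by simp
        then show False using \<open>d' y < ?z'\<close> by simp
      qed
      ultimately have "y < x" by (metis linorder_neqE_nat order_less_irrefl)
      then show "y \<in> T" using y IH unfolding S'_def T_def by auto
    qed
    then have "card S' \<le> card T" using fin \<open>T \<subset> S\<close> card_mono finite_subset by (metis psubset_imp_subset)
    then show False using c1 cS by simp
  qed
qed

lemma reduced_unique:
  assumes rd: "reduced n K J d" and rd': "reduced n K J d'"
    and u: "u \<in> parabolic K" and v: "v \<in> parabolic J" and eq: "d' = u \<circ> d \<circ> v"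
    and J: "J \<subseteq> {1..<n}" and K: "K \<subseteq> {1..<n}"
  shows "d' = d"
proof -
  have dp: "d permutes {1..n}" and dp': "d' permutes {1..n}" using rd rd' by (auto simp: reduced_def)
  have eq2: "d = inv u \<circ> d' \<circ> inv v"
  proof -
    have bu: "bij u" and bv: "bij v" using parab_bij u v by auto
    show ?thesis unfolding eq
      using bij_is_inj[OF bu] bij_is_surj[OF bv] by (simp add: fun_eq_iff inv_f_f surj_f_inv_f)
  qed
  have "d x = d' x" for x
  proof (induction x rule: less_induct)
    case (less x)
    show ?case
    proof (cases "x \<in> {1..n}")
      case False then show ?thesis using permutes_not_in[OF dp] permutes_not_in[OF dp'] by simp
    next
      case True
      have "\<not> d x < d' x" using step_lemma[OF rd rd' u v eq J K True] less by auto
      moreover have "\<not> d' x < d x"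
        using step_lemma[OF rd' rd parab_inv[OF u] parab_inv[OF v] eq2 J K True] less by auto
      ultimately show ?thesis by simp
    qed
  qed
  then show ?thesis by auto
qed

lemma conj_simple:
  assumes dp: "d permutes S"
  shows "d \<circ> simple k \<circ> inv d = transpose (d k) (d (Suc k))"
proof (rule ext)
  fix y
  have iv: "\<And>x. inv d (d x) = x" "\<And>x. d (inv d x) = x" using permutes_inverses[OF dp] by auto
  have "(inv d y = k) = (y = d k)" "(inv d y = Suc k) = (y = d (Suc k))" using iv by metis+
  then show "(d \<circ> simple k \<circ> inv d) y = transpose (d k) (d (Suc k)) y"
    unfolding simple_def transpose_def using iv by auto
qed

lemma conj_block:
  assumes rd: "reduced n K J d" and J: "J \<subseteq> {1..<n}" and K: "K \<subseteq> {1..<n}"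
    and ab: "a \<le> b" and a: "a \<in> {1..n}" and b: "b \<in> {1..n}"
    and sbJ: "sameblock J a b" and sbK: "sameblock K (d a) (d b)"
  shows "sameblock (conj_inter d K J) a b"
  unfolding sameblock_def
proof (intro allI impI)
  fix k assume k: "min a b \<le> k \<and> k < max a b"
  then have ak: "a \<le> k" "k < b" using ab by auto
  have dp: "d permutes {1..n}" and dinc: "\<forall>j\<in>J. d j < d (Suc j)"
    and dinv: "\<forall>k\<in>K. inv d k < inv d (Suc k)" using rd by (auto simp: reduced_def)
  have iv: "\<And>x. inv d (d x) = x" "\<And>x. d (inv d x) = x" using permutes_inverses[OF dp] by auto
  have kJ: "k \<in> J" using sbJ k unfolding sameblock_def by blast
  have mono: "d p \<le> d q" if "a \<le> p" "p \<le> q" "q \<le> b" for p q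
  proof (cases "p = q")
    case False
    have "sameblock J p q" using sbJ that unfolding sameblock_def by auto
    then show ?thesis using chain_strict[OF dinc, of p q] that False by simp
  qed simp
  have d1: "d a \<le> d k" using mono ak by simp
  have d2: "d k < d (Suc k)" using dinc kJ by blast
  have d3: "d (Suc k) \<le> d b" using mono ak by simp
  have dab: "d a < d b" using d1 d2 d3 by simp
  have inblk: "sameblock K (d a) m" if "d a \<le> m" "m \<le> d b" for m
    using sb_sub[OF sbK] that dab by simp
  have succ: "d (Suc k) = Suc (d k)"
  proof (rule ccontr)
    assume "d (Suc k) \<noteq> Suc (d k)"
    then have lt: "Suc (d k) < d (Suc k)" using d2 by simp
    let ?m = "Suc (d k)"
    have A1: "sameblock K (d a) (d k)" using inblk[of "d k"] d1 d2 d3 by simp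
    have A2: "sameblock K (d a) ?m" using inblk[of ?m] d1 d3 lt by simp
    have A3: "sameblock K (d a) (d (Suc k))" using inblk[of "d (Suc k)"] d1 d2 d3 by simp
    have s1: "sameblock K (d k) ?m" using sb_trans[OF sb_sym[OF A1] A2] .
    have s2: "sameblock K ?m (d (Suc k))" using sb_trans[OF sb_sym[OF A2] A3] .
    have "inv d (d k) < inv d ?m" using chain_strict[OF dinv _ s1] by simp
    moreover have "inv d ?m < inv d (d (Suc k))" using chain_strict[OF dinv lt s2] .
    ultimately show False using iv by simp
  qed
  have dkK: "d k \<in> K" using sbK d1 d2 d3 unfolding sameblock_def by auto
  have "d \<circ> simple k \<circ> inv d = simple (d k)"
    using conj_simple[OF dp] succ by (simp add: simple_def)
  then show "k \<in> conj_inter d K J" unfolding conj_inter_def using kJ dkK by blast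
qed


lemma dom_iff: "p \<in> dominant n L \<longleftrightarrow> p \<in> expvecs n \<and>
   (\<forall>i\<in>{1..n}. \<forall>j\<in>{1..n}. i \<le> j \<and> sameblock L i j \<longrightarrow> p j \<le> p i)"
  unfolding dominant_def orbit_iff by auto

lemma antidom_iff: "p \<in> antidominant n L \<longleftrightarrow> (\<lambda>i. - p i) \<in> dominant n L"
  unfolding antidominant_def dominant_def expvecs_def by auto

lemma dom_unique1:
  assumes v: "v permutes {1..n}" and sb: "\<forall>y. sameblock L y (v y)"
    and p: "p \<in> dominant n L" and q: "p \<circ> v \<in> dominant n L"
    and x: "x \<in> {1..n}" and lt: "p (v x) < p x"
  shows False
proof -
  let ?t = "p x"
  define Sp where "Sp = {y. y \<in> {1..n} \<and> sameblock L x y \<and> ?t \<le> p y}"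
  define Sq where "Sq = {y. y \<in> {1..n} \<and> sameblock L x y \<and> ?t \<le> p (v y)}"
  define Lx where "Lx = {y. y \<in> {1..n} \<and> sameblock L x y \<and> y \<le> x}"
  define Lx' where "Lx' = {y. y \<in> {1..n} \<and> sameblock L x y \<and> y < x}"
  have pd: "\<And>i j. i \<in> {1..n} \<Longrightarrow> j \<in> {1..n} \<Longrightarrow> i \<le> j \<Longrightarrow> sameblock L i j \<Longrightarrow> p j \<le> p i"
    using p unfolding dom_iff by blast
  have qd: "\<And>i j. i \<in> {1..n} \<Longrightarrow> j \<in> {1..n} \<Longrightarrow> i \<le> j \<Longrightarrow> sameblock L i j \<Longrightarrow> p (v j) \<le> p (v i)"
    using q unfolding dom_iff by simp
  have c1: "card Sq = card Sp" unfolding Sq_def Sp_def using card_inv[OF v sb, of x "\<lambda>m. ?t \<le> p m"] .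
  have finLx: "finite Lx" unfolding Lx_def by (rule finite_subset[of _ "{1..n}"]) auto
  have finSp: "finite Sp" unfolding Sp_def by (rule finite_subset[of _ "{1..n}"]) auto
  have "Lx \<subseteq> Sp"
  proof
    fix y assume y: "y \<in> Lx"
    then have "p x \<le> p y" using pd[of y x] x sb_sym unfolding Lx_def by blast
    then show "y \<in> Sp" using y unfolding Lx_def Sp_def by simp
  qed
  then have c2: "card Lx \<le> card Sp" using card_mono finSp by blast
  have "Sq \<subseteq> Lx'"
  proof
    fix y assume y: "y \<in> Sq"
    have "\<not> x \<le> y"
    proof
      assume xy: "x \<le> y"
      have "p (v y) \<le> p (v x)" using qd[OF x _ xy] y unfolding Sq_def by simp
      then show False using y lt unfolding Sq_def by simp
    qed
    then show "y \<in> Lx'" using y unfolding Sq_def Lx'_def by simp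
  qed
  moreover have "Lx' \<subset> Lx"
  proof
    show "Lx' \<subseteq> Lx" unfolding Lx'_def Lx_def by auto
    have "x \<in> Lx" "x \<notin> Lx'" using x unfolding Lx_def Lx'_def by auto
    then show "Lx' \<noteq> Lx" by blast
  qed
  ultimately have "card Sq < card Lx" using finLx
    by (meson card_mono finite_subset psubset_card_mono psubset_imp_subset le_less_trans)
  then show False using c1 c2 by simp
qed

lemma dom_unique:
  assumes v: "v permutes {1..n}" and sb: "\<forall>y. sameblock L y (v y)"
    and p: "p \<in> dominant n L" and q: "p \<circ> v \<in> dominant n L"
  shows "p \<circ> v = p"
proof (rule ext)
  fix x
  show "(p \<circ> v) x = p x"
  proof (cases "x \<in> {1..n}")
    case False then show ?thesis using permutes_not_in[OF v] by simp
  next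
    case True
    have iv: "v \<circ> inv v = id" using permutes_inv_o[OF v] by simp
    have vi: "inv v permutes {1..n}" using permutes_inv[OF v] .
    have sbi: "\<forall>y. sameblock L y (inv v y)"
    proof
      fix y
      have "sameblock L (inv v y) (v (inv v y))" using sb by blast
      then show "sameblock L y (inv v y)" using permutes_inverses[OF v] sb_sym by metis
    qed
    have e: "(p \<circ> v) \<circ> inv v = p" by (simp add: comp_assoc iv)
    have "\<not> p (v x) < p x" using dom_unique1[OF v sb p q True] by blast
    moreover have "\<not> p x < p (v x)"
    proof
      assume a: "p x < p (v x)"
      have "(p \<circ> v) (inv v x) < (p \<circ> v) x" using a permutes_inverses(1)[OF v, of x] by simp
      then show False using dom_unique1[OF vi sbi q, unfolded e, OF p True] by blast
    qed
    ultimately show ?thesis by simp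
  qed
qed

definition Phi :: "nat \<Rightarrow> (nat \<Rightarrow> int) \<Rightarrow> int" where
  "Phi n q = (\<Sum>i\<in>{1..n}. int i * q i)"

lemma Phi_swap:
  assumes k: "k \<in> {1..<n}"
  shows "Phi n (q \<circ> simple k) = Phi n q + q k - q (Suc k)"
proof -
  let ?g = "\<lambda>i. int i * q (simple k i) - int i * q i"
  have "Phi n (q \<circ> simple k) - Phi n q = (\<Sum>i\<in>{1..n}. ?g i)"
    unfolding Phi_def by (simp add: sum_subtractf)
  also have "\<dots> = (\<Sum>i\<in>{k, Suc k}. ?g i)"
  proof (rule sum.mono_neutral_right)
    show "finite {1..n}" by simp
    show "{k, Suc k} \<subseteq> {1..n}" using k by auto
    show "\<forall>i\<in>{1..n} - {k, Suc k}. ?g i = 0" by (auto simp: simple_def)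
  qed
  also have "\<dots> = q k - q (Suc k)"
    by (simp add: simple_def algebra_simps)
  finally show ?thesis by simp
qed

lemma sort_exists:
  assumes L: "L \<subseteq> {1..<n}" and p: "p \<in> expvecs n"
  shows "\<exists>v\<in>parabolic L. p \<circ> v \<in> dominant n L"
proof -
  let ?F = "parabolic L"
  let ?f = "\<lambda>v. Phi n (p \<circ> v)"
  have finF: "finite ?F"
    using finite_permutations[of "{1..n}"] parab_perm[OF _ L]
    by (metis finite_atLeastAtMost finite_subset mem_Collect_eq subsetI)
  have ne: "?f ` ?F \<noteq> {}" using parabolic.id by blast
  define m where "m = Min (?f ` ?F)"
  have "m \<in> ?f ` ?F" unfolding m_def using Min_in finF ne by blast
  then obtain v0 where v0: "v0 \<in> ?F" "?f v0 = m" by blast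
  have minm: "\<And>v. v \<in> ?F \<Longrightarrow> ?f v0 \<le> ?f v" using v0 unfolding m_def using Min_le finF by simp
  let ?q = "p \<circ> v0"
  have v0p: "v0 permutes {1..n}" using parab_perm[OF v0(1) L] .
  have ev: "?q \<in> expvecs n" using p permutes_not_in[OF v0p] unfolding expvecs_def by simp
  have desc: "\<forall>k\<in>L. ?q (Suc k) \<le> ?q k"
  proof
    fix k assume kL: "k \<in> L"
    show "?q (Suc k) \<le> ?q k"
    proof (rule ccontr)
      assume "\<not> ?q (Suc k) \<le> ?q k"
      then have lt: "?q k < ?q (Suc k)" by simp
      have kr: "k \<in> {1..<n}" using kL L by auto
      have "v0 \<circ> simple k \<in> ?F" using parab_rmul[OF v0(1) kL] .
      then have "?f v0 \<le> ?f (v0 \<circ> simple k)" using minm by blast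
      also have "?f (v0 \<circ> simple k) = Phi n (?q \<circ> simple k)" by (simp add: comp_assoc)
      also have "\<dots> = ?f v0 + ?q k - ?q (Suc k)" using Phi_swap[OF kr] by simp
      finally show False using lt by simp
    qed
  qed
  have "?q \<in> dominant n L"
    unfolding dom_iff using ev chain_weak[OF desc] by blast
  then show ?thesis using v0(1) by blast
qed


lemma dce_iff: "dcoset_equiv K J (w,a) y \<longleftrightarrow>
   (\<exists>u\<in>parabolic K. \<exists>v\<in>parabolic J. y = (u \<circ> w \<circ> v, a \<circ> v))"
  unfolding dcoset_equiv_def Wmult_def by (simp add: comp_def)

lemma Delta_eq: "Delta n K J = {(d,p). d \<in> minreps n K J \<and> p \<in> dominant n (conj_inter d K J)}"
  unfolding Delta_def Wmult_def by auto

lemma Nabla_eq: "Nabla n K J = {(d,p). d \<in> minreps n K J \<and> p \<in> antidominant n (conj_inter d K J)}"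
  unfolding Nabla_def Wmult_def by auto

lemma Delta_complete:
  assumes J: "J \<subseteq> {1..<n}" and K: "K \<subseteq> {1..<n}"
  shows "complete_reps n K J (Delta n K J)"
  unfolding complete_reps_def
proof (intro conjI ballI impI)
  show "Delta n K J \<subseteq> Wext n"
    unfolding Delta_eq Wext_def minreps_def dominant_def by auto
next
  fix x assume x: "x \<in> Wext n"
  obtain w a where xw: "x = (w,a)" by fastforce
  have wp: "w permutes {1..n}" and a: "a \<in> expvecs n" using x xw by (auto simp: Wext_def)
  obtain uv where uv: "fst uv \<in> parabolic K \<and> snd uv \<in> parabolic J"
    and least: "\<And>uv'. fst uv' \<in> parabolic K \<and> snd uv' \<in> parabolic J \<Longrightarrow>
       cox_length n (fst uv \<circ> w \<circ> snd uv) \<le> cox_length n (fst uv' \<circ> w \<circ> snd uv')"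
    using ex_has_least_nat[of "\<lambda>uv. fst uv \<in> parabolic K \<and> snd uv \<in> parabolic J" "(id,id)"
        "\<lambda>uv. cox_length n (fst uv \<circ> w \<circ> snd uv)"] parabolic.id by auto
  define u0 where "u0 = fst uv"
  define v0 where "v0 = snd uv"
  have u0: "u0 \<in> parabolic K" and v0: "v0 \<in> parabolic J" using uv u0_def v0_def by auto
  define d where "d = u0 \<circ> w \<circ> v0"
  have dp: "d permutes {1..n}" unfolding d_def
    using permutes_compose[OF permutes_compose[OF parab_perm[OF v0 J] wp] parab_perm[OF u0 K]]
    by (simp add: comp_assoc)
  have dmin: "d \<in> minreps n K J"
    unfolding minreps_def
  proof (intro CollectI conjI ballI dp)
    fix u v assume u: "u \<in> parabolic K" and v: "v \<in> parabolic J"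
    have "u \<circ> d \<circ> v = (u \<circ> u0) \<circ> w \<circ> (v0 \<circ> v)" unfolding d_def by (simp add: comp_assoc)
    moreover have "cox_length n d \<le> cox_length n ((u \<circ> u0) \<circ> w \<circ> (v0 \<circ> v))"
      using least[of "(u \<circ> u0, v0 \<circ> v)"] parab_comp[OF u u0] parab_comp[OF v0 v]
      unfolding d_def u0_def v0_def by simp
    ultimately show "cox_length n d \<le> cox_length n (u \<circ> d \<circ> v)" by simp
  qed
  define L where "L = conj_inter d K J"
  have LJ: "L \<subseteq> J" unfolding L_def conj_inter_def by auto
  have L: "L \<subseteq> {1..<n}" using LJ J by auto
  have p0: "a \<circ> v0 \<in> expvecs n" using a permutes_not_in[OF parab_perm[OF v0 J]]
    unfolding expvecs_def by simp
  obtain v1 where v1: "v1 \<in> parabolic L" and q: "a \<circ> v0 \<circ> v1 \<in> dominant n L"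
    using sort_exists[OF L p0] by blast
  have conj: "d \<circ> v \<circ> inv d \<in> parabolic K" if "v \<in> parabolic L" for v
    using that
  proof (induction rule: parabolic.induct)
    case id show ?case using permutes_inv_o(1)[OF dp] parabolic.id by (metis comp_id)
  next
    case (step j v)
    then obtain k where k: "k \<in> K" "d \<circ> simple j \<circ> inv d = simple k"
      unfolding L_def conj_inter_def by blast
    have "(d \<circ> simple j \<circ> inv d) \<circ> (d \<circ> v \<circ> inv d) = d \<circ> simple j \<circ> (inv d \<circ> d) \<circ> v \<circ> inv d"
      by (simp only: comp_assoc)
    also have "\<dots> = d \<circ> (simple j \<circ> v) \<circ> inv d"
      by (simp only: permutes_inv_o(2)[OF dp] comp_id comp_assoc)
    finally have "d \<circ> (simple j \<circ> v) \<circ> inv d = (d \<circ> simple j \<circ> inv d) \<circ> (d \<circ> v \<circ> inv d)" by simp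
    also have "\<dots> = simple k \<circ> (d \<circ> v \<circ> inv d)" using k by simp
    finally have e: "d \<circ> (simple j \<circ> v) \<circ> inv d = simple k \<circ> (d \<circ> v \<circ> inv d)" .
    show ?case unfolding e by (rule parabolic.step[OF k(1) step.IH])
  qed
  define u where "u = d \<circ> inv v1 \<circ> inv d \<circ> u0"
  define v where "v = v0 \<circ> v1"
  have u: "u \<in> parabolic K" unfolding u_def using parab_comp[OF conj[OF parab_inv[OF v1]] u0] .
  have v: "v \<in> parabolic J" unfolding v_def using parab_comp[OF v0 parab_mono[OF v1 LJ]] .
  have "u \<circ> w \<circ> v = d"
  proof -
    have b1: "bij v1" using parab_bij[OF v1] .
    have "u \<circ> w \<circ> v = d \<circ> inv v1 \<circ> inv d \<circ> d \<circ> v1" unfolding u_def v_def d_def by (simp add: comp_assoc)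
    also have "\<dots> = d \<circ> (inv v1 \<circ> v1)" using permutes_inv_o(2)[OF dp] by (simp add: comp_assoc)
    also have "\<dots> = d" using bij_is_inj[OF b1] by (simp add: inv_o_cancel)
    finally show ?thesis .
  qed
  then have "dcoset_equiv K J x (d, a \<circ> v0 \<circ> v1)"
    unfolding xw dce_iff using u v unfolding v_def by (metis comp_assoc)
  moreover have "(d, a \<circ> v0 \<circ> v1) \<in> Delta n K J" unfolding Delta_eq using dmin q L_def by simp
  ultimately show "\<exists>r\<in>Delta n K J. dcoset_equiv K J x r" by blast
next
  fix r r' assume r: "r \<in> Delta n K J" and r': "r' \<in> Delta n K J" and e: "dcoset_equiv K J r r'"
  obtain d p where rd: "r = (d,p)" by fastforce
  obtain d' p' where rd': "r' = (d',p')" by fastforce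
  have dm: "d \<in> minreps n K J" and pd: "p \<in> dominant n (conj_inter d K J)" using r rd Delta_eq by auto
  have dm': "d' \<in> minreps n K J" and pd': "p' \<in> dominant n (conj_inter d' K J)" using r' rd' Delta_eq by auto
  obtain u v where u: "u \<in> parabolic K" and v: "v \<in> parabolic J"
    and eq: "d' = u \<circ> d \<circ> v" and peq: "p' = p \<circ> v"
    using e unfolding rd rd' dce_iff by blast
  have red: "reduced n K J d" and red': "reduced n K J d'"
    using minreps_reduced[OF J K] dm dm' by auto
  have dd: "d' = d" using reduced_unique[OF red red' u v eq J K] .
  have dp: "d permutes {1..n}" using red by (simp add: reduced_def)
  have vp: "v permutes {1..n}" using parab_perm[OF v J] .
  have sbv: "\<forall>y. sameblock (conj_inter d K J) y (v y)"
  proof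
    fix y
    show "sameblock (conj_inter d K J) y (v y)"
    proof (cases "y \<in> {1..n}")
      case False then show ?thesis using permutes_not_in[OF vp] by simp
    next
      case True
      have vy: "v y \<in> {1..n}" using True permutes_in_image[OF vp] by simp
      have sJ: "sameblock J y (v y)" using parab_sb[OF v] .
      have "u (d (v y)) = d y" using eq dd by (metis comp_apply)
      moreover have "sameblock K (d (v y)) (u (d (v y)))" using parab_sb[OF u] .
      ultimately have sK: "sameblock K (d y) (d (v y))" using sb_sym by metis
      show ?thesis
      proof (cases "y \<le> v y")
        case True
        then show ?thesis using conj_block[OF red J K True \<open>y \<in> {1..n}\<close> vy sJ sK] by simp
      next
        case False
        then have "v y \<le> y" by simp
        then have "sameblock (conj_inter d K J) (v y) y"
          using conj_block[OF red J K _ vy \<open>y \<in> {1..n}\<close> sb_sym[OF sJ] sb_sym[OF sK]] by simp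
        then show ?thesis using sb_sym by blast
      qed
    qed
  qed
  have "p \<circ> v = p" using dom_unique[OF vp sbv pd] pd' peq dd by simp
  then show "r = r'" using rd rd' dd peq by simp
qed

definition negx :: "(nat \<Rightarrow> nat) \<times> (nat \<Rightarrow> int) \<Rightarrow> (nat \<Rightarrow> nat) \<times> (nat \<Rightarrow> int)" where
  "negx x = (fst x, \<lambda>i. - snd x i)"

lemma negx_negx[simp]: "negx (negx x) = x" by (simp add: negx_def)

lemma dce_negx: "dcoset_equiv K J x y \<Longrightarrow> dcoset_equiv K J (negx x) (negx y)"
proof -
  assume e: "dcoset_equiv K J x y"
  obtain w a where x: "x = (w,a)" by fastforce
  from e obtain u v where "u \<in> parabolic K" "v \<in> parabolic J" "y = (u \<circ> w \<circ> v, a \<circ> v)"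
    unfolding x dce_iff by blast
  then show ?thesis unfolding x negx_def dce_iff by (auto simp: comp_def)
qed

lemma Wext_negx: "x \<in> Wext n \<Longrightarrow> negx x \<in> Wext n"
  by (auto simp: Wext_def negx_def expvecs_def)

lemma Nabla_negx: "Nabla n K J = negx ` Delta n K J"
proof (rule set_eqI, rule iffI)
  fix z assume z: "z \<in> Nabla n K J"
  obtain d p where zd: "z = (d,p)" by fastforce
  have "d \<in> minreps n K J" "(\<lambda>i. - p i) \<in> dominant n (conj_inter d K J)"
    using z unfolding zd Nabla_eq antidom_iff by auto
  then have "negx z \<in> Delta n K J" unfolding zd Delta_eq negx_def by simp
  moreover have "z = negx (negx z)" by simp
  ultimately show "z \<in> negx ` Delta n K J" by blast
next
  fix z assume "z \<in> negx ` Delta n K J"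
  then obtain y where y: "y \<in> Delta n K J" "z = negx y" by blast
  obtain d p where yd: "y = (d,p)" by fastforce
  have "d \<in> minreps n K J" "p \<in> dominant n (conj_inter d K J)"
    using y(1) unfolding yd Delta_eq by auto
  then show "z \<in> Nabla n K J" unfolding y(2) yd Nabla_eq antidom_iff negx_def by simp
qed

lemma complete_negx:
  assumes c: "complete_reps n K J R"
  shows "complete_reps n K J (negx ` R)"
  unfolding complete_reps_def
proof (intro conjI ballI impI)
  show "negx ` R \<subseteq> Wext n" using c Wext_negx unfolding complete_reps_def by blast
next
  fix x assume "x \<in> Wext n"
  then have "negx x \<in> Wext n" by (rule Wext_negx)
  then obtain r where r: "r \<in> R" "dcoset_equiv K J (negx x) r" using c unfolding complete_reps_def by blast
  then have "dcoset_equiv K J x (negx r)" using dce_negx[OF r(2)] by simp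
  then show "\<exists>r\<in>negx ` R. dcoset_equiv K J x r" using r(1) by blast
next
  fix r r' assume "r \<in> negx ` R" "r' \<in> negx ` R" and e: "dcoset_equiv K J r r'"
  then obtain s s' where s: "s \<in> R" "r = negx s" and s': "s' \<in> R" "r' = negx s'" by blast
  have "dcoset_equiv K J s s'" using dce_negx[OF e] s s' by simp
  then have "s = s'" using c s s' unfolding complete_reps_def by blast
  then show "r = r'" using s s' by simp
qed

theorem proposition2p3:
  fixes n :: nat and J K :: "nat set"
  assumes "n \<ge> 2" and "J \<subseteq> {1..<n}" and "K \<subseteq> {1..<n}"
  shows "complete_reps n K J (Delta n K J) \<and> complete_reps n K J (Nabla n K J)"
  using Delta_complete[OF assms(2,3)] complete_negx[OF Delta_complete[OF assms(2,3)]] Nabla_negx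
  by simp

end
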